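(* Let $\mathbf H$ be the real algebra of quaternions with basis $1,\mathbf i,\mathbf j,\mathbf k$. For any real $a,b,c$, the element $r=a\,\mathbf i\wedge\mathbf j+b\,\mathbf i\wedge\mathbf k+c\,\mathbf j\wedge\mathbf k\in\mathbf H\wedge\mathbf H$ has the property that $[[r,r]]=[r^{12},r^{13}]+[r^{12},r^{23}]+[r^{13},r^{23}]$ commutes with every fully symmetric tensor in $\mathbf H^{\otimes 3}$; hence $\delta(X)=rX-Xr$, $X\in\mathrm{Symm}(\mathbf H\otimes\mathbf H)$, defines (via its dual) a quadratic Poisson bracket on $\mathbf H$ compatible with quaternion multiplication.
   Context: Here $u\wedge v=u\otimes v-v\otimes u$. $\mathbf H\otimes\mathbf H$ and $\mathbf H^{\otimes 3}$ are algebras with componentwise multiplication, and commutators are taken there. For $r=\sum_i\alpha_i\otimes\beta_i$, $r^{12}=\sum_i\alpha_i\otimes\beta_i\otimes1$, $r^{13}=\sum_i\alpha_i\otimes1\otimes\beta_i$, $r^{23}=\sum_i1\otimes\alpha_i\otimes\beta_i$. The bracket defined by $\delta$ is the one whose values on linear functions are given by the dual map $\delta^*\colon\mathbf H^*\wedge\mathbf H^*\to\mathrm{Sym}^2(\mathbf H^* )$ (identifying symmetric tensors $\mathrm{Symm}(\mathbf H\otimes\mathbf H)$ with $(\mathrm{Sym}^2\mathbf H^* )^*$ and $\mathbf H\wedge\mathbf H$ with $(\mathbf H^*\wedge\mathbf H^* )^*$), extended by the Leibniz rule. Compatibility means the multiplication map $\mathbf H\times\mathbf H\to\mathbf H$ is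 a Poisson map for the product Poisson structure. *)

theory Defs
  imports "HOL-Analysis.Analysis"
begin

text \<open>Basis 1, i, j, k of the quaternions H. Elements of H are coefficient
 functions qb => real; tensors in H (x) H and H (x) H (x) H are coefficient
 functions of two resp. three basis indices.\<close>

datatype qb = E1 | Ei | Ej | Ek

lemma UNIV_qb: "(UNIV :: qb set) = {E1, Ei, Ej, Ek}"
  using qb.exhaust by auto

instance qb :: finite
  by standard (simp add: UNIV_qb)

type_synonym quat = "qb \<Rightarrow> real"
type_synonym tens2 = "qb \<Rightarrow> qb \<Rightarrow> real"
type_synonym tens3 = "qb \<Rightarrow> qb \<Rightarrow> qb \<Rightarrow> real"

text \<open>Product of basis elements: (sign, basis element).\<close>
fun qbmul :: "qb \<Rightarrow> qb \<Rightarrow> real \<times> qb" where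
  "qbmul E1 y = (1, y)"
| "qbmul x E1 = (1, x)"
| "qbmul Ei Ei = (-1, E1)"
| "qbmul Ej Ej = (-1, E1)"
| "qbmul Ek Ek = (-1, E1)"
| "qbmul Ei Ej = (1, Ek)"
| "qbmul Ej Ei = (-1, Ek)"
| "qbmul Ej Ek = (1, Ei)"
| "qbmul Ek Ej = (-1, Ei)"
| "qbmul Ek Ei = (1, Ej)"
| "qbmul Ei Ek = (-1, Ej)"

definition qc :: "qb \<Rightarrow> qb \<Rightarrow> qb \<Rightarrow> real" where
  "qc a b c = (if snd (qbmul a b) = c then fst (qbmul a b) else 0)"

definition qmul :: "quat \<Rightarrow> quat \<Rightarrow> quat" where
  "qmul u v = (\<lambda>k. \<Sum>a\<in>UNIV. \<Sum>b\<in>UNIV. u a * v b * qc a b k)"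

definition tmul2 :: "tens2 \<Rightarrow> tens2 \<Rightarrow> tens2" where
  "tmul2 X Y = (\<lambda>p q. \<Sum>a\<in>UNIV. \<Sum>b\<in>UNIV. \<Sum>c\<in>UNIV. \<Sum>d\<in>UNIV.
      X a b * Y c d * qc a c p * qc b d q)"

definition tmul3 :: "tens3 \<Rightarrow> tens3 \<Rightarrow> tens3" where
  "tmul3 X Y = (\<lambda>p q s. \<Sum>a\<in>UNIV. \<Sum>b\<in>UNIV. \<Sum>c\<in>UNIV. \<Sum>d\<in>UNIV. \<Sum>e\<in>UNIV. \<Sum>f\<in>UNIV.
      X a b c * Y d e f * qc a d p * qc b e q * qc c f s)"

definition comm3 :: "tens3 \<Rightarrow> tens3 \<Rightarrow> tens3" where
  "comm3 X Y = (\<lambda>p q s. tmul3 X Y p q s - tmul3 Y X p q s)"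

definition bas :: "qb \<Rightarrow> quat" where
  "bas a = (\<lambda>m. if m = a then 1 else 0)"

definition tens :: "quat \<Rightarrow> quat \<Rightarrow> tens2" where
  "tens u v = (\<lambda>p q. u p * v q)"

definition wedge :: "quat \<Rightarrow> quat \<Rightarrow> tens2" where
  "wedge u v = (\<lambda>p q. tens u v p q - tens v u p q)"

definition rmat :: "real \<Rightarrow> real \<Rightarrow> real \<Rightarrow> tens2" where
  "rmat a b c = (\<lambda>p q. a * wedge (bas Ei) (bas Ej) p q + b * wedge (bas Ei) (bas Ek) p q
                     + c * wedge (bas Ej) (bas Ek) p q)"

definition r12 :: "tens2 \<Rightarrow> tens3" where
  "r12 r = (\<lambda>x y z. r x y * bas E1 z)"
definition r13 :: "tens2 \<Rightarrow> tens3" where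
  "r13 r = (\<lambda>x y z. r x z * bas E1 y)"
definition r23 :: "tens2 \<Rightarrow> tens3" where
  "r23 r = (\<lambda>x y z. bas E1 x * r y z)"

definition cybe :: "tens2 \<Rightarrow> tens3" where
  "cybe r = (\<lambda>p q s. comm3 (r12 r) (r13 r) p q s + comm3 (r12 r) (r23 r) p q s
                   + comm3 (r13 r) (r23 r) p q s)"

definition fully_symmetric :: "tens3 \<Rightarrow> bool" where
  "fully_symmetric S \<longleftrightarrow> (\<forall>x y z. S x y z = S y x z \<and> S x y z = S x z y)"

definition delta :: "tens2 \<Rightarrow> tens2 \<Rightarrow> tens2" where
  "delta r X = (\<lambda>p q. tmul2 r X p q - tmul2 X r p q)"

text \<open>The bracket of the coordinate functions x_p, x_q (dual basis), as a
 quadratic function on H: the quadratic form delta^*(x_p /\ x_q) in Sym^2(H^*)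
 evaluated at x is its pairing with the symmetric tensor x (x) x, i.e.
 the pairing of x_p /\ x_q = x_p (x) x_q - x_q (x) x_p with delta(x (x) x).\<close>
definition pbr :: "tens2 \<Rightarrow> qb \<Rightarrow> qb \<Rightarrow> quat \<Rightarrow> real" where
  "pbr r p q x = delta r (tens x x) p q - delta r (tens x x) q p"

definition pd :: "(quat \<Rightarrow> real) \<Rightarrow> quat \<Rightarrow> qb \<Rightarrow> real" where
  "pd f x l = deriv (\<lambda>t::real. f (\<lambda>m. x m + t * bas l m)) 0"

text \<open>The bracket determined by the values pi on coordinate functions,
 extended by the Leibniz rule.\<close>
definition bracket :: "(qb \<Rightarrow> qb \<Rightarrow> quat \<Rightarrow> real) \<Rightarrow> (quat \<Rightarrow> real) \<Rightarrow> (quat \<Rightarrow> real) \<Rightarrow> quat \<Rightarrow> real" where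
  "bracket P f g x = (\<Sum>p\<in>UNIV. \<Sum>q\<in>UNIV. P p q x * pd f x p * pd g x q)"

definition coord :: "qb \<Rightarrow> quat \<Rightarrow> real" where
  "coord p = (\<lambda>x. x p)"

definition prod_bracket :: "(qb \<Rightarrow> qb \<Rightarrow> quat \<Rightarrow> real) \<Rightarrow> (quat \<Rightarrow> quat \<Rightarrow> real)
    \<Rightarrow> (quat \<Rightarrow> quat \<Rightarrow> real) \<Rightarrow> quat \<Rightarrow> quat \<Rightarrow> real" where
  "prod_bracket P F G u v =
     (\<Sum>a\<in>UNIV. \<Sum>b\<in>UNIV. P a b u * pd (\<lambda>u'. F u' v) u a * pd (\<lambda>u'. G u' v) u b)
   + (\<Sum>a\<in>UNIV. \<Sum>b\<in>UNIV. P a b v * pd (\<lambda>v'. F u v') v a * pd (\<lambda>v'. G u v') v b)"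

text \<open>Poisson structure (skew-symmetry and Jacobi identity, checked on the
 generating coordinate functions).\<close>
definition is_poisson :: "(qb \<Rightarrow> qb \<Rightarrow> quat \<Rightarrow> real) \<Rightarrow> bool" where
  "is_poisson P \<longleftrightarrow>
     (\<forall>p q x. P p q x = - P q p x) \<and>
     (\<forall>p q s x. bracket P (coord p) (bracket P (coord q) (coord s)) x
              + bracket P (coord q) (bracket P (coord s) (coord p)) x
              + bracket P (coord s) (bracket P (coord p) (coord q)) x = 0)"

text \<open>Multiplication H x H -> H is a Poisson map.\<close>
definition mult_compatible :: "(qb \<Rightarrow> qb \<Rightarrow> quat \<Rightarrow> real) \<Rightarrow> bool" where
  "mult_compatible P \<longleftrightarrow>
     (\<forall>p q u v. prod_bracket P (\<lambda>u v. coord p (qmul u v)) (\<lambda>u v. coord q (qmul u v)) u v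
               = P p q (qmul u v))"

end

theory Submission
  imports Defs
begin

definition qd :: "qb \<Rightarrow> qb \<Rightarrow> qb" where "qd c s = snd (qbmul c s)"
definition qs :: "qb \<Rightarrow> qb \<Rightarrow> real" where "qs c s = qc c (qd c s) s"

lemma sum_qb: "(\<Sum>x\<in>UNIV. f x) = f E1 + f Ei + f Ej + f Ek"
  by (simp add: UNIV_qb add.assoc)

lemma collapse_r: "(\<Sum>f\<in>UNIV. qc c f s * h f) = qs c s * h (qd c s)"
  by (cases c; cases s; simp add: sum_qb qc_def qs_def qd_def)

lemma tmul2_red: "tmul2 X Y p q = (\<Sum>a\<in>UNIV. \<Sum>b\<in>UNIV. X a b * qs a p * qs b q * Y (qd a p) (qd b q))"
proof -
  have *: "(\<Sum>c\<in>UNIV. \<Sum>d\<in>UNIV. X a b * Y c d * qc a c p * qc b d q)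
     = X a b * qs a p * qs b q * Y (qd a p) (qd b q)" for a b
  proof -
    have "(\<Sum>c\<in>UNIV. \<Sum>d\<in>UNIV. X a b * Y c d * qc a c p * qc b d q)
     = (\<Sum>c\<in>UNIV. qc a c p * (\<Sum>d\<in>UNIV. qc b d q * (X a b * Y c d)))"
      by (simp add: sum_distrib_left mult_ac)
    also have "\<dots> = (\<Sum>c\<in>UNIV. qc a c p * (qs b q * (X a b * Y c (qd b q))))"
      by (simp only: collapse_r)
    also have "\<dots> = qs a p * (qs b q * (X a b * Y (qd a p) (qd b q)))"
      by (rule collapse_r)
    finally show ?thesis by (simp add: mult_ac)
  qed
  show ?thesis unfolding tmul2_def by (simp only: *)
qed

fun PX :: "real \<Rightarrow> real \<Rightarrow> real \<Rightarrow> qb \<Rightarrow> qb \<Rightarrow> quat \<Rightarrow> real" where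
  "PX a b c E1 Ei x = 4*c*x Ek^2 + 4*c*x Ej^2 - 4*a*x Ei*x Ek + 4*b*x Ei*x Ej"
| "PX a b c E1 Ej x = -4*b*x Ek^2 - 4*a*x Ej*x Ek - 4*c*x Ei*x Ej - 4*b*x Ei^2"
| "PX a b c E1 Ek x = 4*b*x Ej*x Ek + 4*a*x Ej^2 - 4*c*x Ei*x Ek + 4*a*x Ei^2"
| "PX a b c Ei E1 x = -(4*c*x Ek^2 + 4*c*x Ej^2 - 4*a*x Ei*x Ek + 4*b*x Ei*x Ej)"
| "PX a b c Ej E1 x = -(-4*b*x Ek^2 - 4*a*x Ej*x Ek - 4*c*x Ei*x Ej - 4*b*x Ei^2)"
| "PX a b c Ek E1 x = -(4*b*x Ej*x Ek + 4*a*x Ej^2 - 4*c*x Ei*x Ek + 4*a*x Ei^2)"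
| "PX a b c Ei Ej x = 4*c*x E1*x Ej + 4*b*x E1*x Ei"
| "PX a b c Ei Ek x = 4*c*x E1*x Ek - 4*a*x E1*x Ei"
| "PX a b c Ej Ek x = -4*b*x E1*x Ek - 4*a*x E1*x Ej"
| "PX a b c Ej Ei x = -(4*c*x E1*x Ej + 4*b*x E1*x Ei)"
| "PX a b c Ek Ei x = -(4*c*x E1*x Ek - 4*a*x E1*x Ei)"
| "PX a b c Ek Ej x = -(-4*b*x E1*x Ek - 4*a*x E1*x Ej)"
| "PX a b c E1 E1 x = 0"
| "PX a b c Ei Ei x = 0"
| "PX a b c Ej Ej x = 0"
| "PX a b c Ek Ek x = 0"

lemma pbr_PX: "pbr (rmat a b c) = PX a b c"
proof (intro ext)
  fix p q x
  show "pbr (rmat a b c) p q x = PX a b c p q x"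
    by (cases p; cases q; simp add: pbr_def delta_def tmul2_red sum_qb rmat_def wedge_def tens_def bas_def qs_def qd_def qc_def;
        simp add: algebra_simps power2_eq_square)
qed

lemma pd_quad:
  assumes "\<And>t. f (\<lambda>m. x m + t * bas l m) = \<alpha> + \<beta>*t + \<gamma>*t^2"
  shows "pd f x l = \<beta>"
proof -
  have e: "(\<lambda>t. f (\<lambda>m. x m + t * bas l m)) = (\<lambda>t. \<alpha> + \<beta>*t + \<gamma>*t^2)"
    using assms by auto
  have "((\<lambda>t::real. \<alpha> + \<beta>*t + \<gamma>*t^2) has_real_derivative \<beta>) (at 0)"
    by (auto intro!: derivative_eq_intros)
  then show ?thesis unfolding pd_def e by (rule DERIV_imp_deriv)
qed

lemma PX_quad: "PX a b c p q (\<lambda>m. x m + t * y m) = PX a b c p q x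
   + (PX a b c p q (\<lambda>m. x m + y m) - PX a b c p q x - PX a b c p q y) * t + PX a b c p q y * t^2"
  by (cases p; cases q; simp add: algebra_simps power2_eq_square)

lemma pd_PX: "pd (PX a b c p q) x l = PX a b c p q (\<lambda>m. x m + bas l m) - PX a b c p q x - PX a b c p q (bas l)"
  by (rule pd_quad, rule PX_quad)

lemma pd_coord: "pd (coord p) x l = bas l p"
  by (rule pd_quad[where \<gamma>=0]) (simp add: coord_def)

lemma qmul_lin1: "qmul (\<lambda>m. u m + t * w m) v p = qmul u v p + qmul w v p * t"
  by (simp add: qmul_def sum_qb algebra_simps)
lemma qmul_lin2: "qmul u (\<lambda>m. v m + t * w m) p = qmul u v p + qmul u w p * t"
  by (simp add: qmul_def sum_qb algebra_simps)

lemma pd_qmul1: "pd (\<lambda>u'. coord p (qmul u' v)) u l = qmul (bas l) v p"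
  by (rule pd_quad[where \<gamma>=0]) (simp add: coord_def qmul_lin1)
lemma pd_qmul2: "pd (\<lambda>v'. coord p (qmul u v')) v l = qmul u (bas l) p"
  by (rule pd_quad[where \<gamma>=0]) (simp add: coord_def qmul_lin2)

lemma bracket_coord2: "bracket P (coord q) (coord s) = P q s"
proof (intro ext)
  fix x show "bracket P (coord q) (coord s) x = P q s x"
    by (cases q; cases s; simp add: bracket_def pd_coord sum_qb bas_def)
qed

lemma bracket_coord_PX: "bracket (PX a b c) (coord p) (PX a b c q s) x =
  (\<Sum>l\<in>UNIV. PX a b c p l x * (PX a b c q s (\<lambda>m. x m + bas l m) - PX a b c q s x - PX a b c q s (bas l)))"
  by (cases p; simp add: bracket_def pd_coord pd_PX sum_qb bas_def)


lemma tmul3_red: "tmul3 X Y p q s = (\<Sum>a\<in>UNIV. \<Sum>b\<in>UNIV. \<Sum>c\<in>UNIV.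
   X a b c * qs a p * qs b q * qs c s * Y (qd a p) (qd b q) (qd c s))"
proof -
  have *: "(\<Sum>d\<in>UNIV. \<Sum>e\<in>UNIV. \<Sum>f\<in>UNIV. X a b c * Y d e f * qc a d p * qc b e q * qc c f s)
     = X a b c * qs a p * qs b q * qs c s * Y (qd a p) (qd b q) (qd c s)" for a b c
  proof -
    have "(\<Sum>d\<in>UNIV. \<Sum>e\<in>UNIV. \<Sum>f\<in>UNIV. X a b c * Y d e f * qc a d p * qc b e q * qc c f s)
     = (\<Sum>d\<in>UNIV. qc a d p * (\<Sum>e\<in>UNIV. qc b e q * (\<Sum>f\<in>UNIV. qc c f s * (X a b c * Y d e f))))"
      by (simp add: sum_distrib_left mult_ac)
    also have "\<dots> = (\<Sum>d\<in>UNIV. qc a d p * (\<Sum>e\<in>UNIV. qc b e q * (qs c s * (X a b c * Y d e (qd c s)))))"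
      by (simp only: collapse_r)
    also have "\<dots> = (\<Sum>d\<in>UNIV. qc a d p * (qs b q * (qs c s * (X a b c * Y d (qd b q) (qd c s)))))"
      by (simp only: collapse_r)
    also have "\<dots> = qs a p * (qs b q * (qs c s * (X a b c * Y (qd a p) (qd b q) (qd c s))))"
      by (rule collapse_r)
    finally show ?thesis by (simp add: mult_ac)
  qed
  show ?thesis unfolding tmul3_def by (simp only: *)
qed

fun eps :: "qb \<Rightarrow> qb \<Rightarrow> qb \<Rightarrow> real" where
  "eps Ei Ej Ek = 1" | "eps Ej Ek Ei = 1" | "eps Ek Ei Ej = 1"
| "eps Ei Ek Ej = -1" | "eps Ek Ej Ei = -1" | "eps Ej Ei Ek = -1"
| "eps x y z = 0"

fun rk :: "qb \<Rightarrow> nat" where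
  "rk E1 = 0" | "rk Ei = 1" | "rk Ej = 2" | "rk Ek = 3"

lemma sym1: "fully_symmetric S \<Longrightarrow> rk y < rk x \<Longrightarrow> S x y z = S y x z"
  unfolding fully_symmetric_def by blast
lemma sym2: "fully_symmetric S \<Longrightarrow> rk z < rk y \<Longrightarrow> S x y z = S x z y"
  unfolding fully_symmetric_def by blast

lemma eps_comm: assumes fs: "fully_symmetric S"
  shows "comm3 (\<lambda>p q s. K * eps p q s) S = (\<lambda>p q s. 0)"
proof (intro ext)
  fix p q s
  note s1 = sym1[OF fs] and s2 = sym2[OF fs]
  show "comm3 (\<lambda>p q s. K * eps p q s) S p q s = 0"
    by (cases p; cases q; cases s; simp add: comm3_def tmul3_red sum_qb qs_def qd_def qc_def s1 s2; simp add: algebra_simps)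
qed

lemma cybe_eps: "cybe (rmat a b c) = (\<lambda>p q s. 2*(a^2+b^2+c^2) * eps p q s)"
proof (intro ext)
  fix p q s
  show "cybe (rmat a b c) p q s = 2*(a^2+b^2+c^2) * eps p q s"
    by (cases p; cases q; cases s; simp add: cybe_def comm3_def tmul3_red sum_qb r12_def r13_def r23_def
        rmat_def wedge_def tens_def bas_def qs_def qd_def qc_def; simp add: algebra_simps power2_eq_square)
qed


lemma jac: "bracket (PX a b c) (coord p) (bracket (PX a b c) (coord q) (coord s)) x
  + bracket (PX a b c) (coord q) (bracket (PX a b c) (coord s) (coord p)) x
  + bracket (PX a b c) (coord s) (bracket (PX a b c) (coord p) (coord q)) x = 0"
  unfolding bracket_coord2 bracket_coord_PX
  by (cases p; cases q; cases s; simp add: sum_qb bas_def; simp add: algebra_simps power2_eq_square)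

lemma comp: "prod_bracket (PX a b c) (\<lambda>u v. coord p (qmul u v)) (\<lambda>u v. coord q (qmul u v)) u v
   = PX a b c p q (qmul u v)"
  unfolding prod_bracket_def pd_qmul1 pd_qmul2
  by (cases p; cases q; simp add: sum_qb qmul_def bas_def qc_def; simp add: algebra_simps power2_eq_square)

lemma PX_skew: "PX a b c p q x = - PX a b c q p x"
  by (cases p; cases q; simp)

theorem mainTheorem9:
  fixes a b c :: real
  shows "(\<forall>S. fully_symmetric S \<longrightarrow> comm3 (cybe (rmat a b c)) S = (\<lambda>p q s. 0))
         \<and> is_poisson (pbr (rmat a b c))
         \<and> mult_compatible (pbr (rmat a b c))"
proof (intro conjI)
  show "\<forall>S. fully_symmetric S \<longrightarrow> comm3 (cybe (rmat a b c)) S = (\<lambda>p q s. 0)"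
    by (simp add: cybe_eps eps_comm)
  show "is_poisson (pbr (rmat a b c))"
    unfolding pbr_PX is_poisson_def using PX_skew jac by blast
  show "mult_compatible (pbr (rmat a b c))"
    unfolding pbr_PX mult_compatible_def using comp by blast
qed

end
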